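(* Let $G$ be a finite simple graph on the vertex set $\{1,\dots,n\}$ without cycles of length $3$. Then $E_3^{0,1}(G)=0$, $E_3^{0,2}(G)=0$ and $E_3^{1,1}(G)=0$.
   Context: Let $E$ be a complex elliptic curve, $x,y$ a basis of $H^1(E;\mathbb{Q})$ with $xy$ generating $H^2$. Let $E_2(n)$ be the quotient of the free graded-commutative algebra (for total degree) over $\mathbb{Q}$ on $x_i,y_i$ ($1\le i\le n$) of bidegree $(1,0)$ (pullbacks of $x,y$ along the $i$-th projection $E^n\to E$) and $\omega_{ij}=\omega_{ji}$ ($i\ne j$) of bidegree $(0,1)$ by the relations $(x_i-x_j)\omega_{ij}=0$, $(y_i-y_j)\omega_{ij}=0$, $\omega_{ij}\omega_{jk}+\omega_{jk}\omega_{ki}+\omega_{ki}\omega_{ij}=0$ (distinct $i,j,k$), with the derivation $d_2$ of bidegree $(2,-1)$, $d_2x_i=d_2y_i=0$, $d_2\omega_{ij}=(x_i-x_j)(y_i-y_j)$. For a graph $G$ with edge set $\mathcal{E}$, the graphic elliptic arrangement has complement $M(G)=\{P\in E^n\mid P_i\ne P_j \text{ for all } \{i,j\}\in\mathcal{E}\}$; the second page of the rational Leray spectral sequence of $M(G)\hookrightarrow E^n$ is $E_2(G)$, the sub-differential bigraded algebra of $E_2(n)$ generated by all $x_i,y_i$ and the $\omega_{ij}$ with $\{i,j\}\in\mathcal{E}$. $E_3^{p,q}(G)$ denotes the $d_2$-cohomology of $E_2(G)$ in bidegree $(p,q)$. *)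

theory Defs
  imports Complex_Main "HOL-Library.Nat_Bijection"
begin

text \<open>The free graded-commutative algebra over Q on generators of total degree 1
  (x_i, y_i, omega_ij) is the exterior algebra on these generators. We model it
  concretely: an element is a function from finite sets of generators (monomials,
  written in increasing order w.r.t. the injective encoding enc) to rationals.\<close>

datatype gen = X nat | Y nat | W nat nat  \<comment> \<open>W i j stands for omega_ij with i < j\<close>

fun enc :: "gen \<Rightarrow> nat" where
  "enc (X i) = 3 * i"
| "enc (Y i) = 3 * i + 1"
| "enc (W i j) = 3 * prod_encode (i, j) + 2"

fun is_W :: "gen \<Rightarrow> bool" where
  "is_W (W i j) = True"
| "is_W (X i) = False"
| "is_W (Y i) = False"

type_synonym ext = "gen set \<Rightarrow> rat"

definition zero_el :: ext where "zero_el = (\<lambda>_. 0)"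
definition mono :: "gen set \<Rightarrow> ext" where "mono S = (\<lambda>T. if T = S then 1 else 0)"
definition gen_el :: "gen \<Rightarrow> ext" where "gen_el g = mono {g}"
definition add :: "ext \<Rightarrow> ext \<Rightarrow> ext" where "add f g = (\<lambda>S. f S + g S)"
definition smul :: "rat \<Rightarrow> ext \<Rightarrow> ext" where "smul c f = (\<lambda>S. c * f S)"
definition sub :: "ext \<Rightarrow> ext \<Rightarrow> ext" where "sub f g = (\<lambda>S. f S - g S)"

definition inv_count :: "gen set \<Rightarrow> gen set \<Rightarrow> nat" where
  "inv_count A B = card {(a, b). a \<in> A \<and> b \<in> B \<and> enc b < enc a}"

definition mul :: "ext \<Rightarrow> ext \<Rightarrow> ext" where
  "mul f g = (\<lambda>S. \<Sum>p\<in>{(A, B). A \<union> B = S \<and> A \<inter> B = {}}.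
       (-1) ^ inv_count (fst p) (snd p) * f (fst p) * g (snd p))"

definition xg :: "nat \<Rightarrow> ext" where "xg i = gen_el (X i)"
definition yg :: "nat \<Rightarrow> ext" where "yg i = gen_el (Y i)"
definition om :: "nat \<Rightarrow> nat \<Rightarrow> ext" where "om i j = gen_el (W (min i j) (max i j))"

text \<open>The differential d_2 on generators, extended as a derivation of odd total degree.\<close>
definition dgen :: "gen \<Rightarrow> ext" where
  "dgen g = (case g of W i j \<Rightarrow> mul (sub (xg i) (xg j)) (sub (yg i) (yg j)) | _ \<Rightarrow> zero_el)"

definition dmono :: "gen set \<Rightarrow> ext" where
  "dmono S = (\<lambda>T. \<Sum>g\<in>S. (-1) ^ card {h \<in> S. enc h < enc g} * mul (dgen g) (mono (S - {g})) T)"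

definition d2 :: "ext \<Rightarrow> ext" where
  "d2 f = (\<lambda>T. \<Sum>S\<in>{S. f S \<noteq> 0}. f S * dmono S T)"

inductive_set subalg :: "gen set \<Rightarrow> ext set" for Gs :: "gen set" where
  one: "mono {} \<in> subalg Gs"
| gen: "g \<in> Gs \<Longrightarrow> gen_el g \<in> subalg Gs"
| add: "a \<in> subalg Gs \<Longrightarrow> b \<in> subalg Gs \<Longrightarrow> add a b \<in> subalg Gs"
| smul: "a \<in> subalg Gs \<Longrightarrow> smul c a \<in> subalg Gs"
| mul: "a \<in> subalg Gs \<Longrightarrow> b \<in> subalg Gs \<Longrightarrow> mul a b \<in> subalg Gs"

definition gens_all :: "nat \<Rightarrow> gen set" where
  "gens_all n = {X i | i. i \<in> {1..n}} \<union> {Y i | i. i \<in> {1..n}}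
     \<union> {W i j | i j. i < j \<and> i \<in> {1..n} \<and> j \<in> {1..n}}"

definition gens_G :: "nat \<Rightarrow> nat set set \<Rightarrow> gen set" where
  "gens_G n Edg = {X i | i. i \<in> {1..n}} \<union> {Y i | i. i \<in> {1..n}}
     \<union> {W i j | i j. i < j \<and> {i, j} \<in> Edg}"

definition relations :: "nat \<Rightarrow> ext set" where
  "relations n =
     {mul (sub (xg i) (xg j)) (om i j) | i j. i \<in> {1..n} \<and> j \<in> {1..n} \<and> i \<noteq> j}
   \<union> {mul (sub (yg i) (yg j)) (om i j) | i j. i \<in> {1..n} \<and> j \<in> {1..n} \<and> i \<noteq> j}
   \<union> {add (add (mul (om i j) (om j k)) (mul (om j k) (om k i))) (mul (om k i) (om i j))
        | i j k. i \<in> {1..n} \<and> j \<in> {1..n} \<and> k \<in> {1..n} \<and> i \<noteq> j \<and> j \<noteq> k \<and> k \<noteq> i}"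

inductive_set rel_ideal :: "nat \<Rightarrow> ext set" for n :: nat where
  zero: "zero_el \<in> rel_ideal n"
| rel: "r \<in> relations n \<Longrightarrow> r \<in> rel_ideal n"
| add: "a \<in> rel_ideal n \<Longrightarrow> b \<in> rel_ideal n \<Longrightarrow> add a b \<in> rel_ideal n"
| smul: "a \<in> rel_ideal n \<Longrightarrow> smul c a \<in> rel_ideal n"
| lmul: "a \<in> subalg (gens_all n) \<Longrightarrow> r \<in> rel_ideal n \<Longrightarrow> mul a r \<in> rel_ideal n"
| rmul: "a \<in> subalg (gens_all n) \<Longrightarrow> r \<in> rel_ideal n \<Longrightarrow> mul r a \<in> rel_ideal n"

definition homog :: "int \<Rightarrow> int \<Rightarrow> ext \<Rightarrow> bool" where
  "homog p q f = (\<forall>S. f S \<noteq> 0 \<longrightarrow> finite S \<and> int (card {g \<in> S. \<not> is_W g}) = p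
                                          \<and> int (card {g \<in> S. is_W g}) = q)"

text \<open>E_3^{p,q}(G) = 0: every d_2-cocycle of E_2(G) (= image of subalg (gens_G) in the
  quotient by rel_ideal) of bidegree (p,q) is a d_2-coboundary of an element of E_2(G)
  of bidegree (p-2,q+1).\<close>
definition E3_vanishes :: "nat \<Rightarrow> nat set set \<Rightarrow> int \<Rightarrow> int \<Rightarrow> bool" where
  "E3_vanishes n Edg p q =
     (\<forall>a. a \<in> subalg (gens_G n Edg) \<and> homog p q a \<and> d2 a \<in> rel_ideal n \<longrightarrow>
        (\<exists>b. b \<in> subalg (gens_G n Edg) \<and> homog (p - 2) (q + 1) b
             \<and> sub a (d2 b) \<in> rel_ideal n))"

end

theory Submission
  imports Defs
begin


lemma mul_nz: "mul f g S \<noteq> 0 \<Longrightarrow> \<exists>A B. A \<union> B = S \<and> A \<inter> B = {} \<and> f A \<noteq> 0 \<and> g B \<noteq> 0"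
proof -
  assume "mul f g S \<noteq> 0"
  then obtain p where "p \<in> {(A, B). A \<union> B = S \<and> A \<inter> B = {}}"
     "(-1) ^ inv_count (fst p) (snd p) * f (fst p) * g (snd p) \<noteq> (0::rat)"
    unfolding mul_def by (meson sum.not_neutral_contains_not_neutral)
  then show ?thesis by (cases p) auto
qed

lemma subalg_supp: "f \<in> subalg Gs \<Longrightarrow> finite {S. f S \<noteq> 0} \<and> (\<forall>S. f S \<noteq> 0 \<longrightarrow> finite S \<and> S \<subseteq> Gs)"
proof (induction rule: subalg.induct)
  case one
  then show ?case by (simp add: mono_def)
next
  case (gen g)
  then show ?case by (simp add: gen_el_def mono_def)
next
  case (add a b)
  have "{S. add a b S \<noteq> 0} \<subseteq> {S. a S \<noteq> 0} \<union> {S. b S \<noteq> 0}" by (auto simp: add_def)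
  then show ?case using add by (auto simp: add_def intro: finite_subset)
next
  case (smul a c)
  have "{S. smul c a S \<noteq> 0} \<subseteq> {S. a S \<noteq> 0}" by (auto simp: smul_def)
  then show ?case using smul by (auto simp: smul_def intro: finite_subset)
next
  case (mul a b)
  have "{S. mul a b S \<noteq> 0} \<subseteq> (\<lambda>(A,B). A \<union> B) ` ({S. a S \<noteq> 0} \<times> {S. b S \<noteq> 0})"
    by (force dest: mul_nz)
  moreover have "finite ((\<lambda>(A,B). A \<union> B) ` ({S. a S \<noteq> 0} \<times> {S. b S \<noteq> 0}))"
    using mul by auto
  ultimately have "finite {S. mul a b S \<noteq> 0}" by (rule finite_subset)
  moreover have "\<forall>S. mul a b S \<noteq> 0 \<longrightarrow> finite S \<and> S \<subseteq> Gs"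
  proof (intro allI impI)
    fix S assume "mul a b S \<noteq> 0"
    then obtain A B where "A \<union> B = S" "a A \<noteq> 0" "b B \<noteq> 0" by (auto dest: mul_nz)
    then show "finite S \<and> S \<subseteq> Gs" using mul.IH by auto
  qed
  ultimately show ?case by blast
qed

definition wpart :: "gen set \<Rightarrow> gen set" where "wpart S = {g\<in>S. is_W g}"

definition Winv :: "ext \<Rightarrow> bool" where
  "Winv r = ((\<forall>S. r S \<noteq> 0 \<longrightarrow> (\<exists>g\<in>S. is_W g)) \<and>
     (\<forall>S i j. r S \<noteq> 0 \<longrightarrow> wpart S = {W i j} \<longrightarrow> X i \<in> S \<or> X j \<in> S \<or> Y i \<in> S \<or> Y j \<in> S))"

lemma WinvD1: "Winv r \<Longrightarrow> r S \<noteq> 0 \<Longrightarrow> \<exists>g\<in>S. is_W g"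
  unfolding Winv_def by blast
lemma WinvD2: "Winv r \<Longrightarrow> r S \<noteq> 0 \<Longrightarrow> wpart S = {W i j} \<Longrightarrow> X i \<in> S \<or> X j \<in> S \<or> Y i \<in> S \<or> Y j \<in> S"
  unfolding Winv_def by blast
lemma WinvI: "(\<And>S. r S \<noteq> 0 \<Longrightarrow> \<exists>g\<in>S. is_W g) \<Longrightarrow>
   (\<And>S i j. r S \<noteq> 0 \<Longrightarrow> wpart S = {W i j} \<Longrightarrow> X i \<in> S \<or> X j \<in> S \<or> Y i \<in> S \<or> Y j \<in> S) \<Longrightarrow> Winv r"
  unfolding Winv_def by blast

lemma Wpart_sub: assumes "B \<subseteq> S" "g \<in> B" "is_W g" "wpart S = {W i j}" shows "wpart B = {W i j}"
proof -
  have "wpart B \<subseteq> wpart S" using assms(1) unfolding wpart_def by auto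
  moreover have "g \<in> wpart B" using assms unfolding wpart_def by auto
  ultimately show ?thesis using assms(4) by auto
qed

lemma Winv_mulL: assumes "Winv r" shows "Winv (mul a r)"
proof (rule WinvI)
  fix S assume "mul a r S \<noteq> 0"
  then obtain A B where AB: "A \<union> B = S" "r B \<noteq> 0" by (auto dest: mul_nz)
  then obtain g where g: "g \<in> B" "is_W g" using WinvD1[OF assms] by blast
  then show "\<exists>g\<in>S. is_W g" using AB by blast
  fix i j assume S1: "wpart S = {W i j}"
  have "wpart B = {W i j}" using Wpart_sub[OF _ g S1] AB by blast
  then have "X i \<in> B \<or> X j \<in> B \<or> Y i \<in> B \<or> Y j \<in> B" using WinvD2[OF assms AB(2)] by blast
  then show "X i \<in> S \<or> X j \<in> S \<or> Y i \<in> S \<or> Y j \<in> S" using AB by blast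
qed

lemma Winv_mulR: assumes "Winv r" shows "Winv (mul r a)"
proof (rule WinvI)
  fix S assume "mul r a S \<noteq> 0"
  then obtain A B where AB: "A \<union> B = S" "r A \<noteq> 0" by (auto dest: mul_nz)
  then obtain g where g: "g \<in> A" "is_W g" using WinvD1[OF assms] by blast
  then show "\<exists>g\<in>S. is_W g" using AB by blast
  fix i j assume S1: "wpart S = {W i j}"
  have "wpart A = {W i j}" using Wpart_sub[OF _ g S1] AB by blast
  then have "X i \<in> A \<or> X j \<in> A \<or> Y i \<in> A \<or> Y j \<in> A" using WinvD2[OF assms AB(2)] by blast
  then show "X i \<in> S \<or> X j \<in> S \<or> Y i \<in> S \<or> Y j \<in> S" using AB by blast
qed

lemma supp_sub_x: "sub (xg i) (xg j) A \<noteq> 0 \<Longrightarrow> A = {X i} \<or> A = {X j}"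
  by (auto simp: sub_def xg_def gen_el_def mono_def split: if_splits)
lemma supp_sub_y: "sub (yg i) (yg j) A \<noteq> 0 \<Longrightarrow> A = {Y i} \<or> A = {Y j}"
  by (auto simp: sub_def yg_def gen_el_def mono_def split: if_splits)
lemma supp_om: "om i j A \<noteq> 0 \<Longrightarrow> A = {W (min i j) (max i j)}"
  by (auto simp: om_def gen_el_def mono_def split: if_splits)

lemma Wpart2: "{g\<in>{a, W p q}. is_W g} = {W i j} \<Longrightarrow> \<not> is_W a \<Longrightarrow> i = p \<and> j = q"
  by (cases a) auto

lemma Winv_rx: "Winv (mul (sub (xg i) (xg j)) (om i j))"
proof (rule WinvI)
  fix S assume "mul (sub (xg i) (xg j)) (om i j) S \<noteq> 0"
  then obtain A B where AB: "A \<union> B = S" "A = {X i} \<or> A = {X j}" "B = {W (min i j) (max i j)}"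
    by (metis mul_nz supp_sub_x supp_om)
  then have S: "S = {X i, W (min i j) (max i j)} \<or> S = {X j, W (min i j) (max i j)}" by auto
  then show "\<exists>g\<in>S. is_W g" by auto
  fix a b assume H0: "wpart S = {W a b}"
  then have H: "{g\<in>S. is_W g} = {W a b}" by (simp add: wpart_def)
  then have "a = min i j \<and> b = max i j" using S Wpart2 by (metis is_W.simps(2))
  then show "X a \<in> S \<or> X b \<in> S \<or> Y a \<in> S \<or> Y b \<in> S" using S by (auto simp: min_def max_def)
qed

lemma Winv_ry: "Winv (mul (sub (yg i) (yg j)) (om i j))"
proof (rule WinvI)
  fix S assume "mul (sub (yg i) (yg j)) (om i j) S \<noteq> 0"
  then obtain A B where AB: "A \<union> B = S" "A = {Y i} \<or> A = {Y j}" "B = {W (min i j) (max i j)}"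
    by (metis mul_nz supp_sub_y supp_om)
  then have S: "S = {Y i, W (min i j) (max i j)} \<or> S = {Y j, W (min i j) (max i j)}" by auto
  then show "\<exists>g\<in>S. is_W g" by auto
  fix a b assume H0: "wpart S = {W a b}"
  then have H: "{g\<in>S. is_W g} = {W a b}" by (simp add: wpart_def)
  then have "a = min i j \<and> b = max i j" using S Wpart2 by (metis is_W.simps(3))
  then show "X a \<in> S \<or> X b \<in> S \<or> Y a \<in> S \<or> Y b \<in> S" using S by (auto simp: min_def max_def)
qed

lemma Winv_oo: "Winv (mul (om i j) (om k l))"
proof (rule WinvI)
  fix S assume "mul (om i j) (om k l) S \<noteq> 0"
  then obtain A B where AB: "A \<union> B = S" "A \<inter> B = {}" "A = {W (min i j) (max i j)}" "B = {W (min k l) (max k l)}"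
    by (metis mul_nz supp_om)
  then show "\<exists>g\<in>S. is_W g" by auto
  fix a b assume H0: "wpart S = {W a b}"
  then have H: "{g\<in>S. is_W g} = {W a b}" by (simp add: wpart_def)
  have "{g\<in>S. is_W g} = S" using AB by auto
  then have "S = {W a b}" using H by simp
  moreover have "W (min i j) (max i j) \<noteq> W (min k l) (max k l)" using AB by auto
  ultimately have False using AB by auto
  then show "X a \<in> S \<or> X b \<in> S \<or> Y a \<in> S \<or> Y b \<in> S" by simp
qed

lemma Winv_add: "Winv a \<Longrightarrow> Winv b \<Longrightarrow> Winv (add a b)"
  apply (rule WinvI)
   apply (metis WinvD1 add_def add.right_neutral add_0)
  by (metis WinvD2 add_def add.right_neutral add_0)

lemma Winv_rel: "r \<in> relations n \<Longrightarrow> Winv r"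
  unfolding relations_def
  apply (elim UnE CollectE exE conjE)
  by (simp_all add: Winv_rx Winv_ry Winv_add Winv_oo)

lemma Winv_ideal: "r \<in> rel_ideal n \<Longrightarrow> Winv r"
proof (induction rule: rel_ideal.induct)
  case zero
  then show ?case by (simp add: Winv_def zero_el_def)
next
  case (rel r)
  then show ?case by (rule Winv_rel)
next
  case (add a b)
  then show ?case by (simp add: Winv_add)
next
  case (smul a c)
  then show ?case by (simp add: Winv_def smul_def)
next
  case (lmul a r)
  then show ?case by (simp add: Winv_mulL)
next
  case (rmul a r)
  then show ?case by (simp add: Winv_mulR)
qed



lemma sum_single:
  assumes "finite F" "\<And>x. x \<in> F \<Longrightarrow> x \<noteq> a \<Longrightarrow> h x = 0"
  shows "sum h F = (if a \<in> F then h a else 0)"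
proof (cases "a \<in> F")
  case True
  then have "sum h F = h a + sum h (F - {a})" using assms(1) by (simp add: sum.remove)
  moreover have "sum h (F - {a}) = 0" using assms(2) by (intro sum.neutral) auto
  ultimately show ?thesis using True by simp
next
  case False
  then show ?thesis using assms(2) by (auto intro: sum.neutral)
qed

lemma mul_mono_right:
  assumes "finite T"
  shows "mul f (mono B) T = (if B \<subseteq> T then (-1) ^ inv_count (T - B) B * f (T - B) else 0)"
proof -
  let ?I = "{(A, B'). A \<union> B' = T \<and> A \<inter> B' = {}}"
  have fin: "finite ?I"
    by (rule finite_subset[of _ "Pow T \<times> Pow T"]) (auto simp: assms)
  have "mul f (mono B) T = (\<Sum>p\<in>?I. (-1) ^ inv_count (fst p) (snd p) * f (fst p) * mono B (snd p))"
    by (simp add: mul_def)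
  also have "\<dots> = (if (T - B, B) \<in> ?I then (-1) ^ inv_count (T - B) B * f (T - B) * mono B B else 0)"
  proof (rule trans[OF sum_single[OF fin, where a="(T - B, B)"]])
    fix p assume "p \<in> ?I" "p \<noteq> (T - B, B)"
    then show "(-1) ^ inv_count (fst p) (snd p) * f (fst p) * mono B (snd p) = 0"
      by (cases p) (auto simp: mono_def)
  qed simp
  also have "\<dots> = (if B \<subseteq> T then (-1) ^ inv_count (T - B) B * f (T - B) else 0)"
    by (auto simp: mono_def)
  finally show ?thesis .
qed

lemma mul_sub_right: "mul f (sub g h) = sub (mul f g) (mul f h)"
  unfolding mul_def sub_def
  by (rule ext) (simp add: sum_subtractf[symmetric] algebra_simps)

lemma mul_zero_left: "mul zero_el f = zero_el"
  unfolding mul_def zero_el_def by (rule ext) simp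

lemma dgen_nonW: "\<not> is_W g \<Longrightarrow> dgen g = zero_el"
  by (cases g) (auto simp: dgen_def)

lemma dmono_eq:
  assumes "finite T"
  shows "dmono S T = (\<Sum>g\<in>S. (-1) ^ card {h \<in> S. enc h < enc g} *
     (if S - {g} \<subseteq> T then (-1) ^ inv_count (T - (S - {g})) (S - {g}) * dgen g (T - (S - {g})) else 0))"
  unfolding dmono_def by (simp add: mul_mono_right[OF assms])

lemma dmono_nz:
  assumes "finite T" "dmono S T \<noteq> 0"
  shows "\<exists>g\<in>S. is_W g \<and> S - {g} \<subseteq> T \<and> dgen g (T - (S - {g})) \<noteq> 0"
proof -
  obtain g where "g \<in> S" "(-1) ^ card {h \<in> S. enc h < enc g} *
     (if S - {g} \<subseteq> T then (-1) ^ inv_count (T - (S - {g})) (S - {g}) * dgen g (T - (S - {g})) else 0) \<noteq> (0::rat)"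
    using assms dmono_eq by (metis (no_types, lifting) sum.not_neutral_contains_not_neutral)
  then show ?thesis
    by (cases "is_W g") (auto simp: dgen_nonW zero_el_def split: if_splits)
qed

lemma inv_count_single: "inv_count A {b} = card {a \<in> A. enc b < enc a}"
proof -
  have "{(a, b'). a \<in> A \<and> b' \<in> {b} \<and> enc b' < enc a} = (\<lambda>a. (a, b)) ` {a \<in> A. enc b < enc a}"
    by auto
  then show ?thesis unfolding inv_count_def by (simp add: card_image inj_on_def)
qed

lemma dgen_W_expand:
  "dgen (W i j) U = mul (sub (xg i) (xg j)) (mono {Y i}) U - mul (sub (xg i) (xg j)) (mono {Y j}) U"
  unfolding dgen_def yg_def gen_el_def mul_sub_right by (simp add: sub_def)

lemma subx_val: "sub (xg i) (xg j) V = (if V = {X i} then 1 else 0) - (if V = {X j} then 1 else 0)"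
  by (simp add: sub_def xg_def gen_el_def mono_def)

lemma dgen_W_nz:
  assumes "finite U" "dgen (W i j) U \<noteq> 0"
  shows "\<exists>p q. U = {X p, Y q} \<and> p \<in> {i, j} \<and> q \<in> {i, j}"
proof -
  have "mul (sub (xg i) (xg j)) (mono {Y i}) U \<noteq> 0 \<or> mul (sub (xg i) (xg j)) (mono {Y j}) U \<noteq> 0"
    using assms(2) dgen_W_expand by fastforce
  then show ?thesis
    unfolding mul_mono_right[OF assms(1)] subx_val
    by (auto split: if_splits)
qed

lemma card_Xp: "card {a. a = X p \<and> Suc (3 * q) < enc a} = (if q < p then 1 else 0)"
proof -
  have "{a. a = X p \<and> Suc (3 * q) < enc a} = (if q < p then {X p} else {})" by auto
  then show ?thesis by simp
qed

lemma dgen_W_val: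
  "dgen (W i j) {X p, Y q} = (-1) ^ (if q < p then 1 else 0) *
     ((if q = i then 1 else 0) - (if q = j then 1 else 0)) * ((if p = i then 1 else 0) - (if p = j then 1 else 0))"
proof -
  have d: "{X p, Y q} - {Y q} = {X p}" by auto
  have "{a \<in> {X p}. enc (Y q) < enc a} = (if q < p then {X p} else {})"
    by auto
  then have c: "card {a \<in> {X p}. enc (Y q) < enc a} = (if q < p then 1 else 0)"
    by simp
  show ?thesis
    unfolding dgen_W_expand mul_mono_right[OF finite.insertI[OF finite.insertI[OF finite.emptyI]]]
    by (auto simp: d inv_count_single c subx_val card_Xp)
qed

lemma KL1:
  assumes "finite {S. a S \<noteq> 0}" "d2 a T = 0" "\<And>S. a S \<noteq> 0 \<Longrightarrow> S \<noteq> S0 \<Longrightarrow> dmono S T = 0"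
    "dmono S0 T \<noteq> 0"
  shows "a S0 = 0"
proof (rule ccontr)
  assume H: "a S0 \<noteq> 0"
  have "d2 a T = (\<Sum>S\<in>{S. a S \<noteq> 0}. a S * dmono S T)" by (simp add: d2_def)
  also have "\<dots> = (if S0 \<in> {S. a S \<noteq> 0} then a S0 * dmono S0 T else 0)"
    by (rule sum_single[OF assms(1)]) (use assms(3) in auto)
  also have "\<dots> = a S0 * dmono S0 T" using H by simp
  finally show False using assms(2,4) H by simp
qed

lemma KL2:
  assumes "finite {S. a S \<noteq> 0}" "d2 a T = 0"
    "\<And>S. a S \<noteq> 0 \<Longrightarrow> S \<noteq> S1 \<Longrightarrow> S \<noteq> S2 \<Longrightarrow> dmono S T = 0" "S1 \<noteq> S2"
  shows "a S1 * dmono S1 T + a S2 * dmono S2 T = 0"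
proof -
  let ?F = "{S. a S \<noteq> 0} \<union> {S1, S2}"
  have fin: "finite ?F" using assms(1) by simp
  have "d2 a T = (\<Sum>S\<in>{S. a S \<noteq> 0}. a S * dmono S T)" by (simp add: d2_def)
  also have "\<dots> = (\<Sum>S\<in>?F. a S * dmono S T)"
    by (rule sum.mono_neutral_left[OF fin]) auto
  also have "\<dots> = (\<Sum>S\<in>{S1, S2}. a S * dmono S T) + (\<Sum>S\<in>?F - {S1, S2}. a S * dmono S T)"
    using sum.subset_diff[OF _ fin, of "{S1, S2}"] by (simp add: add.commute)
  also have "(\<Sum>S\<in>?F - {S1, S2}. a S * dmono S T) = 0"
    by (rule sum.neutral) (use assms(3) in auto)
  finally show ?thesis using assms(2,4) by simp
qed

lemma isW_ex: "is_W g \<Longrightarrow> \<exists>i j. g = W i j"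
  by (cases g) auto

lemma S_split: "S = {g\<in>S. \<not> is_W g} \<union> {g\<in>S. is_W g}" by auto

lemma shape01:
  assumes "finite S" "card {g\<in>S. \<not> is_W g} = 0" "card {g\<in>S. is_W g} = 1"
  shows "\<exists>i j. S = {W i j}"
proof -
  have e: "{g\<in>S. \<not> is_W g} = {}" using assms by simp
  obtain w where w: "{g\<in>S. is_W g} = {w}" using assms(3) card_1_singleton_iff by (metis One_nat_def)
  then have "is_W w" by auto
  then obtain i j where "w = W i j" using isW_ex by blast
  then show ?thesis using S_split[of S] e w by auto
qed

lemma shape11:
  assumes "finite S" "card {g\<in>S. \<not> is_W g} = 1" "card {g\<in>S. is_W g} = 1"
  shows "\<exists>h i j. S = {h, W i j} \<and> \<not> is_W h"
proof -
  obtain h where e: "{g\<in>S. \<not> is_W g} = {h}" using assms(2) card_1_singleton_iff by (metis One_nat_def)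
  obtain w where w: "{g\<in>S. is_W g} = {w}" using assms(3) card_1_singleton_iff by (metis One_nat_def)
  then have "is_W w" by auto
  then obtain i j where "w = W i j" using isW_ex by blast
  moreover have "\<not> is_W h" using e by auto
  ultimately show ?thesis using S_split[of S] e w by auto
qed

lemma shape02:
  assumes "finite S" "card {g\<in>S. \<not> is_W g} = 0" "card {g\<in>S. is_W g} = 2"
  shows "\<exists>i j k l. S = {W i j, W k l} \<and> W i j \<noteq> W k l"
proof -
  have e: "{g\<in>S. \<not> is_W g} = {}" using assms by simp
  obtain u v where w: "{g\<in>S. is_W g} = {u, v}" "u \<noteq> v" using assms(3) card_2_iff by metis
  then have "is_W u" "is_W v" by auto
  then obtain i j k l where "u = W i j" "v = W k l" using isW_ex by metis
  then show ?thesis using S_split[of S] e w by auto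
qed

lemma d2_zero: "d2 zero_el = zero_el"
  by (simp add: d2_def zero_el_def)

lemma sub_zero: "sub a zero_el = a"
  by (simp add: sub_def zero_el_def)

lemma zero_subalg: "zero_el \<in> subalg Gs"
proof -
  have "smul 0 (mono {}) \<in> subalg Gs" by (intro subalg.smul subalg.one)
  moreover have "smul 0 (mono {}) = zero_el" by (simp add: smul_def zero_el_def)
  ultimately show ?thesis by simp
qed

lemma homog_zero: "homog p q zero_el" by (simp add: homog_def zero_el_def)

lemma E3I:
  assumes "\<And>a. a \<in> subalg (gens_G n Edg) \<Longrightarrow> homog p q a \<Longrightarrow> d2 a \<in> rel_ideal n \<Longrightarrow> a \<in> rel_ideal n"
  shows "E3_vanishes n Edg p q"
  unfolding E3_vanishes_def
  using assms zero_subalg homog_zero d2_zero sub_zero by metis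

lemma nz_noW:
  assumes "r \<in> rel_ideal n" "\<forall>g\<in>T. \<not> is_W g" shows "r T = 0"
  using WinvD1[OF Winv_ideal[OF assms(1)]] assms(2) by blast

lemma gensG_W: "W i j \<in> gens_G n Edg \<longleftrightarrow> i < j \<and> {i, j} \<in> Edg"
  by (auto simp: gens_G_def)
lemma gensG_X: "X i \<in> gens_G n Edg \<longleftrightarrow> i \<in> {1..n}"
  by (auto simp: gens_G_def)
lemma gensG_Y: "Y i \<in> gens_G n Edg \<longleftrightarrow> i \<in> {1..n}"
  by (auto simp: gens_G_def)

lemma homogD:
  "homog p q a \<Longrightarrow> a S \<noteq> 0 \<Longrightarrow> finite S \<and> int (card {g \<in> S. \<not> is_W g}) = p \<and> int (card {g \<in> S. is_W g}) = q"
  unfolding homog_def by blast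

lemma case01:
  assumes "a \<in> subalg (gens_G n Edg)" "homog 0 1 a" "d2 a \<in> rel_ideal n"
  shows "a \<in> rel_ideal n"
proof -
  have supp: "finite {S. a S \<noteq> 0}" "\<And>S. a S \<noteq> 0 \<Longrightarrow> finite S \<and> S \<subseteq> gens_G n Edg"
    using subalg_supp[OF assms(1)] by auto
  have shape: "\<exists>i j. S = {W i j} \<and> i < j" if "a S \<noteq> 0" for S
  proof -
    have "finite S" "card {g \<in> S. \<not> is_W g} = 0" "card {g \<in> S. is_W g} = 1"
      using homogD[OF assms(2) that] by auto
    then obtain i j where "S = {W i j}" using shape01 by blast
    moreover have "i < j" using supp(2)[OF that] calculation gensG_W by auto
    ultimately show ?thesis by blast
  qed
  have "a S0 = 0" for S0
  proof (rule ccontr)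
    assume H: "a S0 \<noteq> 0"
    then obtain i j where S0: "S0 = {W i j}" "i < j" using shape by blast
    let ?T = "{X i, Y j}"
    have finT: "finite ?T" by simp
    have d0: "d2 a ?T = 0" by (rule nz_noW[OF assms(3)]) auto
    have "a S0 = 0"
    proof (rule KL1[OF supp(1) d0])
      fix S assume "a S \<noteq> 0" "S \<noteq> S0"
      then obtain k l where S: "S = {W k l}" "k < l" using shape by blast
      show "dmono S ?T = 0"
      proof (rule ccontr)
        assume nz: "dmono S ?T \<noteq> 0"
        have "dgen (W k l) ?T \<noteq> 0" using dmono_nz[OF finT nz] S by auto
        then obtain p q where "?T = {X p, Y q}" "p \<in> {k, l}" "q \<in> {k, l}" using dgen_W_nz[OF finT] by blast
        then have "i \<in> {k, l}" "j \<in> {k, l}" by (auto simp: doubleton_eq_iff)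
        then have "k = i" "l = j" using S(2) S0(2) by auto
        then show False using S S0 \<open>S \<noteq> S0\<close> by simp
      qed
    next
      show "dmono S0 ?T \<noteq> 0"
        using S0 by (simp add: dmono_eq[OF finT] inv_count_def dgen_W_val)
    qed
    then show False using H by simp
  qed
  then have "a = zero_el" by (auto simp: zero_el_def)
  then show ?thesis by (simp add: rel_ideal.zero)
qed

lemma two_case: "S = {u, v} \<Longrightarrow> u \<noteq> v \<Longrightarrow> g \<in> S \<Longrightarrow> \<exists>ov. S = {g, ov} \<and> g \<noteq> ov \<and> S - {g} = {ov}"
  by auto

lemma dm2_nz:
  assumes "finite T" "W i j \<noteq> W k l" "W k l \<in> T" "W i j \<notin> T" "dgen (W i j) (T - {W k l}) \<noteq> 0"
  shows "dmono {W i j, W k l} T \<noteq> 0"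
proof -
  have a: "{W i j, W k l} - {W i j} = {W k l}" "{W i j, W k l} - {W k l} = {W i j}" using assms(2) by auto
  have "dmono {W i j, W k l} T = (-1) ^ card {h \<in> {W i j, W k l}. enc h < enc (W i j)} *
     ((-1) ^ inv_count (T - {W k l}) {W k l} * dgen (W i j) (T - {W k l}))"
    using assms(2,3,4) by (simp add: dmono_eq[OF assms(1)] a)
  then show ?thesis using assms(5) by simp
qed

lemma dm11:
  assumes "finite T" "\<not> is_W h"
  shows "dmono {h, W i j} T = (-1) ^ card {g \<in> {h, W i j}. enc g < enc (W i j)} *
     (if h \<in> T then (-1) ^ inv_count (T - {h}) {h} * dgen (W i j) (T - {h}) else 0)"
proof -
  have ne: "h \<noteq> W i j" using assms(2) by auto
  have a: "{h, W i j} - {W i j} = {h}" using ne by auto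
  show ?thesis
    using ne by (simp add: dmono_eq[OF assms(1)] a dgen_nonW[OF assms(2)] zero_el_def)
qed

lemma dm11_nz:
  assumes "finite T" "\<not> is_W h" "h \<in> T" "dgen (W i j) (T - {h}) \<noteq> 0"
  shows "dmono {h, W i j} T \<noteq> 0"
  using assms by (simp add: dm11)

lemma dgen_W_nz2: "i \<noteq> j \<Longrightarrow> p \<in> {i, j} \<Longrightarrow> q \<in> {i, j} \<Longrightarrow> dgen (W i j) {X p, Y q} \<noteq> 0"
  by (auto simp: dgen_W_val)

lemma mul_infinite: assumes "\<not> finite T" shows "mul f g T = 0"
proof -
  let ?I = "{(A, B). A \<union> B = T \<and> A \<inter> B = {}}"
  have "Pow T \<subseteq> fst ` ?I"
  proof
    fix A assume "A \<in> Pow T"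
    then have "(A, T - A) \<in> ?I" by auto
    then show "A \<in> fst ` ?I" by (rule rev_image_eqI) simp
  qed
  have "\<not> finite ?I"
  proof
    assume "finite ?I"
    then have "finite (fst ` ?I)" by (rule finite_imageI)
    then have "finite (Pow T)" using \<open>Pow T \<subseteq> fst ` ?I\<close> by (rule finite_subset[rotated])
    then show False using assms by simp
  qed
  then show ?thesis unfolding mul_def by simp
qed

lemma om_mono: "i < j \<Longrightarrow> om i j = mono {W i j}"
  by (simp add: om_def gen_el_def)

lemma encW1: "enc (X i) < enc (W i j)" "enc (Y i) < enc (W i j)"
  using le_prod_encode_1[of i j] by auto
lemma encW2: "enc (X j) < enc (W i j)" "enc (Y j) < enc (W i j)"
  using le_prod_encode_2[of j i] by auto

lemma rX_val:
  assumes "i < j"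
  shows "mul (sub (xg i) (xg j)) (om i j) T = (if T = {X i, W i j} then 1 else 0) - (if T = {X j, W i j} then 1 else 0)"
proof (cases "finite T")
  case False
  then show ?thesis using mul_infinite by auto
next
  case True
  have c1: "inv_count {X i} {W i j} = 0" using encW1(1)[of i j] by (simp add: inv_count_single)
  have c2: "inv_count {X j} {W i j} = 0" using encW2(1)[of j i] by (simp add: inv_count_single)
  have ne: "{X i} \<noteq> {X j}" "{X i, W i j} \<noteq> {X j, W i j}" using assms by (auto simp: doubleton_eq_iff)
  have L: "mul (sub (xg i) (xg j)) (om i j) T = (if {W i j} \<subseteq> T then (-1) ^ inv_count (T - {W i j}) {W i j} *
     ((if T - {W i j} = {X i} then 1 else 0) - (if T - {W i j} = {X j} then 1 else 0)) else 0)"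
    unfolding om_mono[OF assms] mul_mono_right[OF True] subx_val ..
  show ?thesis
  proof (cases "W i j \<in> T")
    case False
    then show ?thesis unfolding L by auto
  next
    case True
    show ?thesis
    proof (cases "T = {X i, W i j}")
      case True
      have "T - {W i j} = {X i}" using True by auto
      then show ?thesis unfolding L using True c1 ne by simp
    next
      case F1: False
      show ?thesis
      proof (cases "T = {X j, W i j}")
        case True
        have "T - {W i j} = {X j}" using True by auto
        then show ?thesis unfolding L using True c2 ne by simp
      next
        case False
        have "T - {W i j} \<noteq> {X i}" "T - {W i j} \<noteq> {X j}" using False F1 \<open>W i j \<in> T\<close> by auto
        then show ?thesis unfolding L using False F1 by simp
      qed
    qed
  qed
qed

lemma suby_val: "sub (yg i) (yg j) V = (if V = {Y i} then 1 else 0) - (if V = {Y j} then 1 else 0)"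
  by (simp add: sub_def yg_def gen_el_def mono_def)

lemma rY_val:
  assumes "i < j"
  shows "mul (sub (yg i) (yg j)) (om i j) T = (if T = {Y i, W i j} then 1 else 0) - (if T = {Y j, W i j} then 1 else 0)"
proof (cases "finite T")
  case False
  then show ?thesis using mul_infinite by auto
next
  case True
  have c1: "inv_count {Y i} {W i j} = 0" using encW1(2)[of i j] by (simp add: inv_count_single)
  have c2: "inv_count {Y j} {W i j} = 0" using encW2(2)[of j i] by (simp add: inv_count_single)
  have ne: "{Y i} \<noteq> {Y j}" "{Y i, W i j} \<noteq> {Y j, W i j}" using assms by (auto simp: doubleton_eq_iff)
  have L: "mul (sub (yg i) (yg j)) (om i j) T = (if {W i j} \<subseteq> T then (-1) ^ inv_count (T - {W i j}) {W i j} *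
     ((if T - {W i j} = {Y i} then 1 else 0) - (if T - {W i j} = {Y j} then 1 else 0)) else 0)"
    unfolding om_mono[OF assms] mul_mono_right[OF True] suby_val ..
  show ?thesis
  proof (cases "W i j \<in> T")
    case False
    then show ?thesis unfolding L by auto
  next
    case True
    show ?thesis
    proof (cases "T = {Y i, W i j}")
      case True
      have "T - {W i j} = {Y i}" using True by auto
      then show ?thesis unfolding L using True c1 ne by simp
    next
      case F1: False
      show ?thesis
      proof (cases "T = {Y j, W i j}")
        case True
        have "T - {W i j} = {Y j}" using True by auto
        then show ?thesis unfolding L using True c2 ne by simp
      next
        case False
        have "T - {W i j} \<noteq> {Y i}" "T - {W i j} \<noteq> {Y j}" using False F1 \<open>W i j \<in> T\<close> by auto
        then show ?thesis unfolding L using False F1 by simp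
      qed
    qed
  qed
qed

lemma sum_ideal: "finite E \<Longrightarrow> (\<forall>p\<in>E. f p \<in> rel_ideal n) \<Longrightarrow> (\<lambda>T. \<Sum>p\<in>E. f p T) \<in> rel_ideal n"
proof (induction E rule: finite_induct)
  case empty
  then show ?case using rel_ideal.zero by (simp add: zero_el_def)
next
  case (insert x F)
  then have "add (f x) (\<lambda>T. \<Sum>p\<in>F. f p T) \<in> rel_ideal n" by (intro rel_ideal.add) auto
  moreover have "add (f x) (\<lambda>T. \<Sum>p\<in>F. f p T) = (\<lambda>T. \<Sum>p\<in>insert x F. f p T)"
    using insert by (simp add: add_def)
  ultimately show ?case by simp
qed

lemma cardW: "enc h < enc (W i j) \<Longrightarrow> card {g \<in> {h, W i j}. enc g < enc (W i j)} = 1"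
proof -
  assume "enc h < enc (W i j)"
  then have "{g \<in> {h, W i j}. enc g < enc (W i j)} = {h}" by auto
  then show ?thesis by simp
qed

lemma dmS1: assumes "i < j" shows "dmono {X i, W i j} {X i, X j, Y j} = -1"
proof -
  have t: "{X i, X j, Y j} - {X i} = {X j, Y j}" using assms by auto
  have "{a \<in> {X j, Y j}. enc (X i) < enc a} = {X j, Y j}" using assms by auto
  then have ic: "inv_count {X j, Y j} {X i} = 2" by (simp add: inv_count_single)
  have e: "dmono {X i, W i j} {X i, X j, Y j} = (-1) ^ card {g \<in> {X i, W i j}. enc g < enc (W i j)} *
     (if X i \<in> {X i, X j, Y j} then (-1) ^ inv_count ({X i, X j, Y j} - {X i}) {X i} * dgen (W i j) ({X i, X j, Y j} - {X i}) else 0)"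
    by (rule dm11) simp_all
  have cw: "card {g \<in> {X i, W i j}. enc g < enc (W i j)} = 1" by (rule cardW[OF encW1(1)])
  show ?thesis using assms by (simp only: e cw) (simp add: t ic dgen_W_val)
qed

lemma dmS2: assumes "i < j" shows "dmono {X j, W i j} {X i, X j, Y j} = -1"
proof -
  have t: "{X i, X j, Y j} - {X j} = {X i, Y j}" using assms by auto
  have "{a \<in> {X i, Y j}. enc (X j) < enc a} = {Y j}" using assms by auto
  then have ic: "inv_count {X i, Y j} {X j} = 1" by (simp add: inv_count_single)
  have e: "dmono {X j, W i j} {X i, X j, Y j} = (-1) ^ card {g \<in> {X j, W i j}. enc g < enc (W i j)} *
     (if X j \<in> {X i, X j, Y j} then (-1) ^ inv_count ({X i, X j, Y j} - {X j}) {X j} * dgen (W i j) ({X i, X j, Y j} - {X j}) else 0)"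
    by (rule dm11) simp_all
  have cw: "card {g \<in> {X j, W i j}. enc g < enc (W i j)} = 1" by (rule cardW[OF encW2(1)])
  show ?thesis using assms by (simp only: e cw) (simp add: t ic dgen_W_val)
qed

lemma dmS1y: assumes "i < j" shows "dmono {Y i, W i j} {Y i, Y j, X j} = -1"
proof -
  have t: "{Y i, Y j, X j} - {Y i} = {X j, Y j}" using assms by auto
  have "{a \<in> {X j, Y j}. enc (Y i) < enc a} = {X j, Y j}" using assms by auto
  then have ic: "inv_count {X j, Y j} {Y i} = 2" by (simp add: inv_count_single)
  have e: "dmono {Y i, W i j} {Y i, Y j, X j} = (-1) ^ card {g \<in> {Y i, W i j}. enc g < enc (W i j)} *
     (if Y i \<in> {Y i, Y j, X j} then (-1) ^ inv_count ({Y i, Y j, X j} - {Y i}) {Y i} * dgen (W i j) ({Y i, Y j, X j} - {Y i}) else 0)"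
    by (rule dm11) simp_all
  have cw: "card {g \<in> {Y i, W i j}. enc g < enc (W i j)} = 1" by (rule cardW[OF encW1(2)])
  show ?thesis using assms by (simp only: e cw) (simp add: t ic dgen_W_val)
qed

lemma dmS2y: assumes "i < j" shows "dmono {Y j, W i j} {Y i, Y j, X j} = -1"
proof -
  have t: "{Y i, Y j, X j} - {Y j} = {X j, Y i}" using assms by auto
  have "{a \<in> {X j, Y i}. enc (Y j) < enc a} = {}" using assms by auto
  then have ic: "inv_count {X j, Y i} {Y j} = 0" by (simp add: inv_count_single)
  have e: "dmono {Y j, W i j} {Y i, Y j, X j} = (-1) ^ card {g \<in> {Y j, W i j}. enc g < enc (W i j)} *
     (if Y j \<in> {Y i, Y j, X j} then (-1) ^ inv_count ({Y i, Y j, X j} - {Y j}) {Y j} * dgen (W i j) ({Y i, Y j, X j} - {Y j}) else 0)"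
    by (rule dm11) simp_all
  have cw: "card {g \<in> {Y j, W i j}. enc g < enc (W i j)} = 1" by (rule cardW[OF encW2(2)])
  show ?thesis using assms by (simp only: e cw) (simp add: t ic dgen_W_val)
qed

lemma dm11_rev:
  assumes "finite T" "\<not> is_W h" "dmono {h, W i j} T \<noteq> 0"
  shows "h \<in> T \<and> dgen (W i j) (T - {h}) \<noteq> 0"
  using assms by (simp add: dm11 split: if_splits)

lemma XY_eq: "{X a, Y b} = {X p, Y q} \<longleftrightarrow> a = p \<and> b = q" by (auto simp: doubleton_eq_iff)
lemma XX_neq: "{X a, X b} \<noteq> {X p, Y q}" by (auto simp: doubleton_eq_iff)
lemma YY_neq: "{Y a, Y b} \<noteq> {X p, Y q}" by (auto simp: doubleton_eq_iff)
lemma pair_eq: "k \<in> {c, d} \<Longrightarrow> u \<in> {c, d} \<Longrightarrow> k \<noteq> u \<Longrightarrow> {c, d} = {k, u}" by auto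
lemma ord_pair: "(c::nat) < d \<Longrightarrow> i < j \<Longrightarrow> {c, d} = {i, j} \<Longrightarrow> c = i \<and> d = j"
proof -
  assume H: "c < d" "i < j" "{c, d} = {i, j}"
  have "(c = i \<and> d = j) \<or> (c = j \<and> d = i)" using H(3) by (simp add: doubleton_eq_iff)
  moreover have "\<not> (c = j \<and> d = i)" using H(1,2) by linarith
  ultimately show ?thesis by blast
qed

lemma relX: "i \<in> {1..n} \<Longrightarrow> j \<in> {1..n} \<Longrightarrow> i \<noteq> j \<Longrightarrow> mul (sub (xg i) (xg j)) (om i j) \<in> rel_ideal n"
  apply (rule rel_ideal.rel)
  unfolding relations_def
  apply (rule UnI1, rule UnI1, rule CollectI)
  apply (rule exI[of _ i], rule exI[of _ j])
  by simp

lemma relY: "i \<in> {1..n} \<Longrightarrow> j \<in> {1..n} \<Longrightarrow> i \<noteq> j \<Longrightarrow> mul (sub (yg i) (yg j)) (om i j) \<in> rel_ideal n"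
  apply (rule rel_ideal.rel)
  unfolding relations_def
  apply (rule UnI1, rule UnI2, rule CollectI)
  apply (rule exI[of _ i], rule exI[of _ j])
  by simp

definition four :: "nat \<Rightarrow> nat \<Rightarrow> gen set set" where
  "four i j = {{X i, W i j}, {X j, W i j}, {Y i, W i j}, {Y j, W i j}}"

lemma four_W: "T \<in> four i j \<Longrightarrow> W c d \<in> T \<Longrightarrow> c = i \<and> d = j"
  by (auto simp: four_def)
lemma four_W2: "T \<in> four i j \<Longrightarrow> W i j \<in> T"
  by (auto simp: four_def)

context
  fixes n :: nat and Edg :: "nat set set"
  assumes tri: "\<And>i j k. \<not> ({i, j} \<in> Edg \<and> {j, k} \<in> Edg \<and> {k, i} \<in> Edg)"
    and edg: "\<And>i j. {i, j} \<in> Edg \<Longrightarrow> i \<in> {1..n} \<and> j \<in> {1..n} \<and> i \<noteq> j"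
begin

lemma case02:
  assumes "a \<in> subalg (gens_G n Edg)" "homog 0 2 a" "d2 a \<in> rel_ideal n"
  shows "a \<in> rel_ideal n"
proof -
  have supp: "finite {S. a S \<noteq> 0}" "\<And>S. a S \<noteq> 0 \<Longrightarrow> finite S \<and> S \<subseteq> gens_G n Edg"
    using subalg_supp[OF assms(1)] by auto
  have shape: "\<exists>i j k l. S = {W i j, W k l} \<and> W i j \<noteq> W k l \<and> i < j \<and> k < l \<and> {i,j} \<in> Edg \<and> {k,l} \<in> Edg"
    if "a S \<noteq> 0" for S
  proof -
    have "finite S" "card {g \<in> S. \<not> is_W g} = 0" "card {g \<in> S. is_W g} = 2"
      using homogD[OF assms(2) that] by auto
    then obtain i j k l where "S = {W i j, W k l}" "W i j \<noteq> W k l" using shape02 by blast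
    moreover have "i < j \<and> {i,j} \<in> Edg" "k < l \<and> {k,l} \<in> Edg" using supp(2)[OF that] calculation gensG_W by auto
    ultimately show ?thesis by blast
  qed
  have elemW: "\<exists>p q. g = W p q \<and> p < q \<and> {p, q} \<in> Edg" if "a S \<noteq> 0" "g \<in> S" for S g
    using shape[OF that(1)] that(2) by auto
  have T0: "d2 a T = 0" if "finite T" "wpart T = {W k l}" "X k \<notin> T" "X l \<notin> T" "Y k \<notin> T" "Y l \<notin> T" for T k l
    using WinvD2[OF Winv_ideal[OF assms(3)] _ that(2)] that by blast
  have contrib: "\<exists>p q. S = {W p q, W k l} \<and> W p q \<noteq> W k l \<and> p < q \<and> {p, q} \<in> Edg \<and> dgen (W p q) (T - {W k l}) \<noteq> 0"
    if cH: "a S \<noteq> 0" "dmono S T \<noteq> 0" "finite T" "wpart T = {W k l}" for S T k l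
  proof -
    obtain g where g: "g \<in> S" "is_W g" "S - {g} \<subseteq> T" "dgen g (T - (S - {g})) \<noteq> 0"
      using dmono_nz[OF cH(3,2)] by blast
    obtain i j k' l' where S: "S = {W i j, W k' l'}" "W i j \<noteq> W k' l'" using shape[OF cH(1)] by blast
    obtain ov where o: "S = {g, ov}" "g \<noteq> ov" "S - {g} = {ov}" using two_case[OF S g(1)] by blast
    have "ov \<in> S" using o(1) by blast
    then have "is_W ov" using S(1) by auto
    then have "ov \<in> wpart T" using cH(3) o(3) g(3) by (auto simp: wpart_def)
    then have oW: "ov = W k l" using cH(4) by simp
    obtain p q where pq: "g = W p q" "p < q" "{p, q} \<in> Edg" using elemW[OF cH(1) g(1)] by blast
    have "S = {W p q, W k l}" using o(1) oW pq(1) by simp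
    moreover have "W p q \<noteq> W k l" using o(2) oW pq(1) by simp
    moreover have "dgen (W p q) (T - {W k l}) \<noteq> 0" using g(4) o(3) oW pq(1) by simp
    ultimately show ?thesis using pq by blast
  qed
  have stageA: "a {W i j, W k l} = 0" if "i < j" "k < l" "{i, j} \<inter> {k, l} = {}" for i j k l
  proof -
    let ?T = "{W k l, X i, Y j}"
    have finT: "finite ?T" by simp
    have wp: "wpart ?T = {W k l}" by (auto simp: wpart_def)
    have d0: "d2 a ?T = 0" by (rule T0[OF finT wp]) (use that in auto)
    show ?thesis
    proof (rule KL1[OF supp(1) d0])
      fix S assume H: "a S \<noteq> 0" "S \<noteq> {W i j, W k l}"
      show "dmono S ?T = 0"
      proof (rule ccontr)
        assume "dmono S ?T \<noteq> 0"
        then obtain p q where pq: "S = {W p q, W k l}" "W p q \<noteq> W k l" "p < q" "dgen (W p q) (?T - {W k l}) \<noteq> 0"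
          using contrib[OF H(1) _ finT wp] by blast
        have "?T - {W k l} = {X i, Y j}" by auto
        then have "dgen (W p q) {X i, Y j} \<noteq> 0" using pq by simp
        then obtain p' q' where "{X i, Y j} = {X p', Y q'}" "p' \<in> {p, q}" "q' \<in> {p, q}"
          using dgen_W_nz by (meson finite.emptyI finite.insertI)
        then have "i \<in> {p, q}" "j \<in> {p, q}" by (auto simp: doubleton_eq_iff)
        then have "p = i" "q = j" using pq(3) that(1) by auto
        then show False using pq H by simp
      qed
    next
      have "?T - {W k l} = {X i, Y j}" by auto
      moreover have "dgen (W i j) {X i, Y j} \<noteq> 0" using dgen_W_nz2[of i j i j] that by simp
      moreover have "W i j \<noteq> W k l" "W i j \<notin> ?T" using that by auto
      ultimately show "dmono {W i j, W k l} ?T \<noteq> 0" by (intro dm2_nz) auto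
    qed
  qed
  have "a S0 = 0" for S0
  proof (rule ccontr)
    assume H0: "a S0 \<noteq> 0"
    then obtain i j k l where S0: "S0 = {W i j, W k l}" "W i j \<noteq> W k l" "i < j" "k < l" "{i,j} \<in> Edg" "{k,l} \<in> Edg"
      using shape by blast
    consider "{i, j} \<inter> {k, l} = {}" | "{i, j} \<inter> {k, l} \<noteq> {}" by blast
    then show False
    proof cases
      case 1
      then show False using stageA[OF S0(3,4) 1] H0 S0(1) by simp
    next
      case 2
      obtain m where m: "m \<in> {i, j}" "m \<notin> {k, l}"
      proof -
        have "\<not> {i, j} \<subseteq> {k, l}" using S0(2,3,4) by auto
        then show ?thesis using that by blast
      qed
      obtain e where e: "e \<in> {i, j}" "e \<in> {k, l}" using 2 by blast
      have me: "{i, j} = {m, e}" using m e S0(3) by auto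
      obtain w where w: "{k, l} = {e, w}" using e(2) by auto
      let ?T = "{W k l, X m, Y m}"
      have finT: "finite ?T" by simp
      have wp: "wpart ?T = {W k l}" by (auto simp: wpart_def)
      have d0: "d2 a ?T = 0" by (rule T0[OF finT wp]) (use m in auto)
      have "a S0 = 0"
      proof (rule KL1[OF supp(1) d0])
        fix S assume H: "a S \<noteq> 0" "S \<noteq> S0"
        show "dmono S ?T = 0"
        proof (rule ccontr)
          assume "dmono S ?T \<noteq> 0"
          then obtain p q where pq: "S = {W p q, W k l}" "W p q \<noteq> W k l" "p < q" "{p, q} \<in> Edg"
              "dgen (W p q) (?T - {W k l}) \<noteq> 0"
            using contrib[OF H(1) _ finT wp] by blast
          have "?T - {W k l} = {X m, Y m}" by auto
          then have "dgen (W p q) {X m, Y m} \<noteq> 0" using pq by simp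
          then obtain p' q' where "{X m, Y m} = {X p', Y q'}" "p' \<in> {p, q}" "q' \<in> {p, q}"
            using dgen_W_nz by (meson finite.emptyI finite.insertI)
          then have mpq: "m \<in> {p, q}" by (auto simp: doubleton_eq_iff)
          show False
          proof (cases "{p, q} \<inter> {k, l} = {}")
            case True
            then show False using stageA[OF pq(3) S0(4) True] H pq(1) by simp
          next
            case False
            then obtain s where s: "s \<in> {p, q}" "s \<in> {k, l}" by blast
            have "s \<noteq> m" using s m by auto
            then have pqs: "{p, q} = {m, s}" using s mpq pq(3) by auto
            show False
            proof (cases "s = e")
              case True
              then have "{p, q} = {i, j}" using pqs me by simp
              then have "p = i" "q = j" using pq(3) S0(3) by (auto simp: doubleton_eq_iff)
              then show False using H pq(1) S0(1) by simp
            next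
              case False
              then have sw: "s = w" using s(2) w by auto
              have "{m, e} \<in> Edg" using me S0(5) by simp
              moreover have "{e, w} \<in> Edg" using w S0(6) by simp
              moreover have "{w, m} \<in> Edg" using pqs sw pq(4) by (simp add: insert_commute)
              ultimately show False using tri by blast
            qed
          qed
        qed
      next
        have "?T - {W k l} = {X m, Y m}" by auto
        moreover have "dgen (W i j) {X m, Y m} \<noteq> 0" using dgen_W_nz2[of i j m m] m S0(3) by simp
        moreover have "W i j \<notin> ?T" using S0(2) by auto
        ultimately show "dmono S0 ?T \<noteq> 0" unfolding S0(1) using S0(2) by (intro dm2_nz) auto
      qed
      then show False using H0 by simp
    qed
  qed
  then have "a = zero_el" by (auto simp: zero_el_def)
  then show ?thesis by (simp add: rel_ideal.zero)
qed


lemma case11: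
  assumes "a \<in> subalg (gens_G n Edg)" "homog 1 1 a" "d2 a \<in> rel_ideal n"
  shows "a \<in> rel_ideal n"
proof -
  have supp: "finite {S. a S \<noteq> 0}" "\<And>S. a S \<noteq> 0 \<Longrightarrow> finite S \<and> S \<subseteq> gens_G n Edg"
    using subalg_supp[OF assms(1)] by auto
  have shape: "\<exists>h c d. S = {h, W c d} \<and> \<not> is_W h \<and> c < d \<and> {c, d} \<in> Edg"
    if "a S \<noteq> 0" for S
  proof -
    have "finite S" "card {g \<in> S. \<not> is_W g} = 1" "card {g \<in> S. is_W g} = 1"
      using homogD[OF assms(2) that] by auto
    then obtain h c d where "S = {h, W c d}" "\<not> is_W h" using shape11 by blast
    moreover have "c < d \<and> {c, d} \<in> Edg" using supp(2)[OF that] calculation gensG_W by auto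
    ultimately show ?thesis by blast
  qed
  have contrib: "\<exists>h c d p q. S = {h, W c d} \<and> \<not> is_W h \<and> c < d \<and> {c, d} \<in> Edg \<and> h \<in> T
      \<and> T - {h} = {X p, Y q} \<and> p \<in> {c, d} \<and> q \<in> {c, d}"
    if cH: "a S \<noteq> 0" "dmono S T \<noteq> 0" "finite T" for S T
  proof -
    obtain h c d where hcd: "S = {h, W c d}" "\<not> is_W h" "c < d" "{c, d} \<in> Edg" using shape[OF cH(1)] by blast
    have "h \<in> T \<and> dgen (W c d) (T - {h}) \<noteq> 0" using dm11_rev[OF cH(3) hcd(2)] cH(2) hcd(1) by simp
    moreover have "finite (T - {h})" using cH(3) by simp
    ultimately obtain p q where "T - {h} = {X p, Y q}" "p \<in> {c, d}" "q \<in> {c, d}"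
      using dgen_W_nz by blast
    then show ?thesis using hcd \<open>h \<in> T \<and> _\<close> by blast
  qed
  have d0: "d2 a T = 0" if "\<forall>g\<in>T. \<not> is_W g" for T
    by (rule nz_noW[OF assms(3) that])
  have other: "\<exists>u v. {i, j} = {u, v} \<and> u \<noteq> v \<and> {k, u} \<notin> Edg" if oH: "{i, j} \<in> Edg" for i j k :: nat
  proof -
    have ij: "i \<noteq> j" using edg[OF oH] by simp
    show ?thesis
    proof (cases "{k, i} \<in> Edg")
      case False
      show ?thesis by (rule exI[of _ i], rule exI[of _ j]) (use ij False in simp)
    next
      case True
      have "{k, j} \<notin> Edg"
      proof
        assume "{k, j} \<in> Edg"
        then have "{j, k} \<in> Edg" by (simp add: insert_commute)
        then show False using tri[of i j k] oH True by blast
      qed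
      show ?thesis by (rule exI[of _ j], rule exI[of _ i]) (use ij \<open>{k, j} \<notin> Edg\<close> in \<open>simp add: insert_commute\<close>)
    qed
  qed
  have st1X: "a {X k, W i j} = 0" if sH: "i < j" "{i, j} \<in> Edg" "k \<notin> {i, j}" for i j k
  proof -
    obtain u v where uv: "{i, j} = {u, v}" "u \<noteq> v" "{k, u} \<notin> Edg" using other[OF sH(2)] by blast
    have kuv: "k \<noteq> u" "k \<noteq> v" using uv(1) sH(3) by auto
    let ?T = "{X v, X k, Y u}"
    have finT: "finite ?T" by simp
    have z: "d2 a ?T = 0" by (rule d0) auto
    show ?thesis
    proof (rule KL1[OF supp(1) z])
      fix S assume H: "a S \<noteq> 0" "S \<noteq> {X k, W i j}"
      show "dmono S ?T = 0"
      proof (rule ccontr)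
        assume "dmono S ?T \<noteq> 0"
        then obtain h c d p q where C: "S = {h, W c d}" "\<not> is_W h" "c < d" "{c, d} \<in> Edg" "h \<in> ?T"
          "?T - {h} = {X p, Y q}" "p \<in> {c, d}" "q \<in> {c, d}"
          using contrib[OF H(1) _ finT] by blast
        consider "h = X v" | "h = X k" | "h = Y u" using C(5) by blast
        then show False
        proof cases
          case 1
          then have "?T - {h} = {X k, Y u}" using kuv by auto
          then have "p = k" "q = u" using C(6) XY_eq by auto
          then have "{c, d} = {k, u}" by (intro pair_eq) (use C(7,8) kuv in auto)
          then show False using C(4) uv(3) by simp
        next
          case 2
          then have "?T - {h} = {X v, Y u}" using kuv by auto
          then have "p = v" "q = u" using C(6) XY_eq by auto
          then have "{c, d} = {v, u}" by (intro pair_eq) (use C(7,8) uv(2) in auto)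
          then have "{c, d} = {i, j}" using uv(1) by (simp add: insert_commute)
          then have "c = i" "d = j" using ord_pair C(3) sH(1) by blast+
          then show False using H(2) C(1) 2 by simp
        next
          case 3
          then have "?T - {h} = {X v, X k}" using kuv by auto
          then show False using C(6) XX_neq by metis
        qed
      qed
    next
      have "?T - {X k} = {X v, Y u}" using kuv by auto
      moreover have "dgen (W i j) {X v, Y u} \<noteq> 0" using dgen_W_nz2[of i j v u] uv sH(1) by auto
      ultimately show "dmono {X k, W i j} ?T \<noteq> 0" by (intro dm11_nz) auto
    qed
  qed
  have st1Y: "a {Y k, W i j} = 0" if sH: "i < j" "{i, j} \<in> Edg" "k \<notin> {i, j}" for i j k
  proof -
    obtain u v where uv: "{i, j} = {u, v}" "u \<noteq> v" "{k, u} \<notin> Edg" using other[OF sH(2)] by blast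
    have kuv: "k \<noteq> u" "k \<noteq> v" using uv(1) sH(3) by auto
    let ?T = "{X u, Y v, Y k}"
    have finT: "finite ?T" by simp
    have z: "d2 a ?T = 0" by (rule d0) auto
    show ?thesis
    proof (rule KL1[OF supp(1) z])
      fix S assume H: "a S \<noteq> 0" "S \<noteq> {Y k, W i j}"
      show "dmono S ?T = 0"
      proof (rule ccontr)
        assume "dmono S ?T \<noteq> 0"
        then obtain h c d p q where C: "S = {h, W c d}" "\<not> is_W h" "c < d" "{c, d} \<in> Edg" "h \<in> ?T"
          "?T - {h} = {X p, Y q}" "p \<in> {c, d}" "q \<in> {c, d}"
          using contrib[OF H(1) _ finT] by blast
        consider "h = Y v" | "h = Y k" | "h = X u" using C(5) by blast
        then show False
        proof cases
          case 1
          then have "?T - {h} = {X u, Y k}" using kuv by auto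
          then have "p = u" "q = k" using C(6) XY_eq by auto
          then have "{c, d} = {k, u}" by (intro pair_eq) (use C(7,8) kuv in auto)
          then show False using C(4) uv(3) by simp
        next
          case 2
          then have "?T - {h} = {X u, Y v}" using kuv by auto
          then have "p = u" "q = v" using C(6) XY_eq by auto
          then have "{c, d} = {v, u}" by (intro pair_eq) (use C(7,8) uv(2) in auto)
          then have "{c, d} = {i, j}" using uv(1) by (simp add: insert_commute)
          then have "c = i" "d = j" using ord_pair C(3) sH(1) by blast+
          then show False using H(2) C(1) 2 by simp
        next
          case 3
          then have "?T - {h} = {Y v, Y k}" using kuv by auto
          then show False using C(6) YY_neq by metis
        qed
      qed
    next
      have "?T - {Y k} = {X u, Y v}" using kuv by auto
      moreover have "dgen (W i j) {X u, Y v} \<noteq> 0" using dgen_W_nz2[of i j u v] uv sH(1) by auto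
      ultimately show "dmono {Y k, W i j} ?T \<noteq> 0" by (intro dm11_nz) auto
    qed
  qed
  have st2X: "a {X j, W i j} = - a {X i, W i j}" if sH: "i < j" "{i, j} \<in> Edg" for i j
  proof -
    let ?T = "{X i, X j, Y j}"
    have finT: "finite ?T" by simp
    have z: "d2 a ?T = 0" by (rule d0) auto
    have ne: "{X i, W i j} \<noteq> {X j, W i j}" using sH(1) by (auto simp: doubleton_eq_iff)
    have "a {X i, W i j} * dmono {X i, W i j} ?T + a {X j, W i j} * dmono {X j, W i j} ?T = 0"
    proof (rule KL2[OF supp(1) z _ ne])
      fix S assume H: "a S \<noteq> 0" "S \<noteq> {X i, W i j}" "S \<noteq> {X j, W i j}"
      show "dmono S ?T = 0"
      proof (rule ccontr)
        assume "dmono S ?T \<noteq> 0"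
        then obtain h c d p q where C: "S = {h, W c d}" "\<not> is_W h" "c < d" "{c, d} \<in> Edg" "h \<in> ?T"
          "?T - {h} = {X p, Y q}" "p \<in> {c, d}" "q \<in> {c, d}"
          using contrib[OF H(1) _ finT] by blast
        consider "h = X i" | "h = X j" | "h = Y j" using C(5) by blast
        then show False
        proof cases
          case 1
          then have "?T - {h} = {X j, Y j}" using sH(1) by auto
          then have "p = j" using C(6) XY_eq by auto
          have "i \<in> {c, d}"
          proof (rule ccontr)
            assume "i \<notin> {c, d}"
            then have "a {X i, W c d} = 0" using st1X[OF C(3,4)] by blast
            then show False using H(1) C(1) 1 by simp
          qed
          then have "{c, d} = {i, j}" by (intro pair_eq) (use C(7) \<open>p = j\<close> sH(1) in auto)
          then have "c = i" "d = j" using ord_pair C(3) sH(1) by blast+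
          then show False using H(2) C(1) 1 by simp
        next
          case 2
          then have "?T - {h} = {X i, Y j}" using sH(1) by auto
          then have "p = i" "q = j" using C(6) XY_eq by auto
          then have "{c, d} = {i, j}" by (intro pair_eq) (use C(7,8) sH(1) in auto)
          then have "c = i" "d = j" using ord_pair C(3) sH(1) by blast+
          then show False using H(3) C(1) 2 by simp
        next
          case 3
          then have "?T - {h} = {X i, X j}" using sH(1) by auto
          then show False using C(6) XX_neq by metis
        qed
      qed
    qed
    then show ?thesis using dmS1[OF sH(1)] dmS2[OF sH(1)] by simp
  qed
  have st2Y: "a {Y j, W i j} = - a {Y i, W i j}" if sH: "i < j" "{i, j} \<in> Edg" for i j
  proof -
    let ?T = "{Y i, Y j, X j}"
    have finT: "finite ?T" by simp
    have z: "d2 a ?T = 0" by (rule d0) auto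
    have ne: "{Y i, W i j} \<noteq> {Y j, W i j}" using sH(1) by (auto simp: doubleton_eq_iff)
    have "a {Y i, W i j} * dmono {Y i, W i j} ?T + a {Y j, W i j} * dmono {Y j, W i j} ?T = 0"
    proof (rule KL2[OF supp(1) z _ ne])
      fix S assume H: "a S \<noteq> 0" "S \<noteq> {Y i, W i j}" "S \<noteq> {Y j, W i j}"
      show "dmono S ?T = 0"
      proof (rule ccontr)
        assume "dmono S ?T \<noteq> 0"
        then obtain h c d p q where C: "S = {h, W c d}" "\<not> is_W h" "c < d" "{c, d} \<in> Edg" "h \<in> ?T"
          "?T - {h} = {X p, Y q}" "p \<in> {c, d}" "q \<in> {c, d}"
          using contrib[OF H(1) _ finT] by blast
        consider "h = Y i" | "h = Y j" | "h = X j" using C(5) by blast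
        then show False
        proof cases
          case 1
          then have "?T - {h} = {X j, Y j}" using sH(1) by auto
          then have "p = j" using C(6) XY_eq by auto
          have "i \<in> {c, d}"
          proof (rule ccontr)
            assume "i \<notin> {c, d}"
            then have "a {Y i, W c d} = 0" using st1Y[OF C(3,4)] by blast
            then show False using H(1) C(1) 1 by simp
          qed
          then have "{c, d} = {i, j}" by (intro pair_eq) (use C(7) \<open>p = j\<close> sH(1) in auto)
          then have "c = i" "d = j" using ord_pair C(3) sH(1) by blast+
          then show False using H(2) C(1) 1 by simp
        next
          case 2
          then have "?T - {h} = {X j, Y i}" using sH(1) by auto
          then have "p = j" "q = i" using C(6) XY_eq by auto
          then have "{c, d} = {i, j}" by (intro pair_eq) (use C(7,8) sH(1) in auto)
          then have "c = i" "d = j" using ord_pair C(3) sH(1) by blast+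
          then show False using H(3) C(1) 2 by simp
        next
          case 3
          then have "?T - {h} = {Y i, Y j}" using sH(1) by auto
          then show False using C(6) YY_neq by metis
        qed
      qed
    qed
    then show ?thesis using dmS1y[OF sH(1)] dmS2y[OF sH(1)] by simp
  qed
  define E where "E = {(i, j). i < j \<and> {i, j} \<in> Edg}"
  have finE: "finite E"
  proof (rule finite_subset[of _ "{1..n} \<times> {1..n}"])
    show "E \<subseteq> {1..n} \<times> {1..n}" using edg unfolding E_def by blast
  qed simp
  define f where "f = (\<lambda>(i, j). add (smul (a {X i, W i j}) (mul (sub (xg i) (xg j)) (om i j)))
                               (smul (a {Y i, W i j}) (mul (sub (yg i) (yg j)) (om i j))))"
  have fI: "\<forall>p\<in>E. f p \<in> rel_ideal n"
  proof
    fix p assume "p \<in> E"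
    then obtain i j where p: "p = (i, j)" "i < j" "{i, j} \<in> Edg" unfolding E_def by blast
    then have "i \<in> {1..n}" "j \<in> {1..n}" "i \<noteq> j" using edg by auto
    then show "f p \<in> rel_ideal n" unfolding p(1) f_def
      by (auto intro!: rel_ideal.add rel_ideal.smul relX relY)
  qed
  have fval: "f (i, j) T = a {X i, W i j} * ((if T = {X i, W i j} then 1 else 0) - (if T = {X j, W i j} then 1 else 0))
      + a {Y i, W i j} * ((if T = {Y i, W i j} then 1 else 0) - (if T = {Y j, W i j} then 1 else 0))"
    if "i < j" for i j T
    by (simp add: f_def add_def smul_def rX_val[OF that] rY_val[OF that])
  have fzero: "f (c, d) T = 0" if "(c, d) \<in> E" "T \<notin> four c d" for c d T
  proof -
    have "c < d" using that unfolding E_def by simp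
    then show ?thesis using that(2) by (simp add: fval four_def)
  qed
  have key: "a T = (\<Sum>p\<in>E. f p T)" for T
  proof (cases "\<exists>p\<in>E. T \<in> four (fst p) (snd p)")
    case True
    then obtain i j where ij: "(i, j) \<in> E" "T \<in> four i j" by auto
    have ij2: "i < j" "{i, j} \<in> Edg" using ij(1) unfolding E_def by auto
    have "(\<Sum>p\<in>E. f p T) = (if (i, j) \<in> E then f (i, j) T else 0)"
    proof (rule sum_single[OF finE])
      fix p assume "p \<in> E" "p \<noteq> (i, j)"
      then obtain c d where p: "p = (c, d)" "(c, d) \<in> E" by (cases p) auto
      have "T \<notin> four c d"
      proof
        assume "T \<in> four c d"
        then have "W c d \<in> T" by (rule four_W2)
        then have "c = i \<and> d = j" using four_W[OF ij(2)] by blast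
        then show False using p \<open>p \<noteq> (i, j)\<close> by simp
      qed
      then show "f p T = 0" using fzero p by simp
    qed
    then have sum: "(\<Sum>p\<in>E. f p T) = f (i, j) T" using ij(1) by simp
    have ne: "{X i, W i j} \<noteq> {X j, W i j}" "{Y i, W i j} \<noteq> {Y j, W i j}" using ij2(1) by (auto simp: doubleton_eq_iff)
    consider "T = {X i, W i j}" | "T = {X j, W i j}" | "T = {Y i, W i j}" | "T = {Y j, W i j}"
      using ij(2) unfolding four_def by blast
    then show ?thesis
    proof cases
      case 1
      then show ?thesis unfolding sum fval[OF ij2(1)] using ne by (simp add: doubleton_eq_iff)
    next
      case 2
      then show ?thesis unfolding sum fval[OF ij2(1)] using ne st2X[OF ij2] by (simp add: doubleton_eq_iff)
    next
      case 3
      then show ?thesis unfolding sum fval[OF ij2(1)] using ne by (simp add: doubleton_eq_iff)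
    next
      case 4
      then show ?thesis unfolding sum fval[OF ij2(1)] using ne st2Y[OF ij2] by (simp add: doubleton_eq_iff)
    qed
  next
    case False
    have "(\<Sum>p\<in>E. f p T) = 0"
    proof (rule sum.neutral, rule ballI)
      fix p assume "p \<in> E"
      then obtain c d where p: "p = (c, d)" "(c, d) \<in> E" by (cases p) auto
      then have "T \<notin> four c d" using False by force
      then show "f p T = 0" using fzero p by simp
    qed
    moreover have "a T = 0"
    proof (rule ccontr)
      assume H: "a T \<noteq> 0"
      then obtain h c d where hcd: "T = {h, W c d}" "\<not> is_W h" "c < d" "{c, d} \<in> Edg" using shape by blast
      have cdE: "(c, d) \<in> E" using hcd unfolding E_def by simp
      obtain k where k: "h = X k \<or> h = Y k" using hcd(2) by (cases h) auto
      show False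
      proof (cases "k \<in> {c, d}")
        case True
        then have "T \<in> four c d" using k hcd(1) unfolding four_def by auto
        then show False using False cdE by force
      next
        case kn: False
        then show False using k st1X[OF hcd(3,4) kn] st1Y[OF hcd(3,4) kn] H hcd(1) by auto
      qed
    qed
    ultimately show ?thesis by simp
  qed
  then have "a = (\<lambda>T. \<Sum>p\<in>E. f p T)" by (rule ext)
  then show ?thesis using sum_ideal[OF finE fI] by simp
qed

end


theorem lemma4p4:
  fixes n :: nat and Edg :: "nat set set"
  assumes "\<forall>e\<in>Edg. \<exists>i j. e = {i, j} \<and> i \<noteq> j \<and> i \<in> {1..n} \<and> j \<in> {1..n}"
    and "\<not> (\<exists>i j k. {i, j} \<in> Edg \<and> {j, k} \<in> Edg \<and> {k, i} \<in> Edg)"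
  shows "E3_vanishes n Edg 0 1 \<and> E3_vanishes n Edg 0 2 \<and> E3_vanishes n Edg 1 1"
proof -
  have tri: "\<And>i j k. \<not> ({i, j} \<in> Edg \<and> {j, k} \<in> Edg \<and> {k, i} \<in> Edg)" using assms(2) by blast
  have edg: "i \<in> {1..n} \<and> j \<in> {1..n} \<and> i \<noteq> j" if "{i, j} \<in> Edg" for i j
  proof -
    have "\<exists>x y. {i, j} = {x, y} \<and> x \<noteq> y \<and> x \<in> {1..n} \<and> y \<in> {1..n}" using bspec[OF assms(1) that] .
    then obtain x y where xy: "{i, j} = {x, y}" "x \<noteq> y" "x \<in> {1..n}" "y \<in> {1..n}" by blast
    have "i \<in> {i, j}" "j \<in> {i, j}" by simp_all
    then have ij: "i \<in> {x, y}" "j \<in> {x, y}" unfolding xy(1) .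
    have "x \<in> {x, y}" "y \<in> {x, y}" by simp_all
    then have xyij: "x \<in> {i, j}" "y \<in> {i, j}" unfolding xy(1)[symmetric] .
    have "i \<noteq> j"
    proof
      assume "i = j"
      then have "x = i" "y = i" using xyij by simp_all
      then show False using xy(2) by simp
    qed
    moreover note ij
    ultimately show ?thesis using xy by auto
  qed
  have "E3_vanishes n Edg 0 1" by (rule E3I) (rule case01)
  moreover have "E3_vanishes n Edg 0 2" by (rule E3I) (rule case02[OF tri edg])
  moreover have "E3_vanishes n Edg 1 1" by (rule E3I) (rule case11[OF tri edg])
  ultimately show ?thesis by blast
qed

end
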